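(* Let $c_1>0>c_2$, $L=c_1-c_2$, $t_0>0$, let $u,q_1,q_2$ be as in the context, and for $\xi\in\mathbb R$ set $$C(\xi)=c_2-c_1e^{-Lt_0}+Le^{\xi+c_2t_0},\qquad D(\xi)=L^2e^{-c_1t_0}-Lc_1e^{\xi}+Lc_2e^{\xi-Lt_0}.$$ Then for every $\xi\in[q_1(0),q_2(0)]$ and every $t\in[0,t_0)$ both quantities $$D(\xi)+\big(c_1e^{c_2(t-t_0)}-c_2e^{c_1(t-t_0)}\big)C(\xi)\quad\text{and}\quad \big(c_1e^{L(t-t_0)}-c_2\big)D(\xi)+L^2e^{c_1(t-t_0)}C(\xi)$$ are strictly negative, so that $$y_m(t,\xi)=\ln\!\left(\frac{e^{c_2(t-t_0)}}{L}\cdot\frac{\big(c_1e^{L(t-t_0)}-c_2\big)D(\xi)+L^2e^{c_1(t-t_0)}C(\xi)}{D(\xi)+\big(c_1e^{c_2(t-t_0)}-c_2e^{c_1(t-t_0)}\big)C(\xi)}\right)$$ is well defined. Moreover, for each such $\xi$, $y_m(0,\xi)=\xi$, $q_1(t)\le y_m(t,\xi)\le q_2(t)$, and $t\mapsto y_m(t,\xi)$ solves the characteristic equation $$\partial_t y_m(t,\xi)=u\big(t,y_m(t,\xi)\big),\qquad 0\le t<t_0,$$ and $y_m(t,\xi)\to 0$ as $t\uparrow t_0$.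
   Context: For $t\neq t_0$ define $$p_1(t)=\frac{c_1-c_2e^{L(t-t_0)}}{1-e^{L(t-t_0)}},\qquad p_2(t)=\frac{c_2-c_1e^{L(t-t_0)}}{1-e^{L(t-t_0)}},$$ and for all $t$ define $$q_1(t)=\ln L+c_1(t-t_0)-\ln\big(c_1-c_2e^{L(t-t_0)}\big),\qquad q_2(t)=-\ln L+c_2(t-t_0)+\ln\big(c_1e^{L(t-t_0)}-c_2\big).$$ Set $u(t,x)=p_1(t)e^{-|x-q_1(t)|}+p_2(t)e^{-|x-q_2(t)|}$ for $x\in\mathbb R$, $t<t_0$. *)

theory Defs
  imports Complex_Main
begin

definition p1 :: "real \<Rightarrow> real \<Rightarrow> real \<Rightarrow> real \<Rightarrow> real" where
  "p1 c1 c2 t0 t = (c1 - c2 * exp ((c1 - c2) * (t - t0))) / (1 - exp ((c1 - c2) * (t - t0)))"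

definition p2 :: "real \<Rightarrow> real \<Rightarrow> real \<Rightarrow> real \<Rightarrow> real" where
  "p2 c1 c2 t0 t = (c2 - c1 * exp ((c1 - c2) * (t - t0))) / (1 - exp ((c1 - c2) * (t - t0)))"

definition q1 :: "real \<Rightarrow> real \<Rightarrow> real \<Rightarrow> real \<Rightarrow> real" where
  "q1 c1 c2 t0 t = ln (c1 - c2) + c1 * (t - t0) - ln (c1 - c2 * exp ((c1 - c2) * (t - t0)))"

definition q2 :: "real \<Rightarrow> real \<Rightarrow> real \<Rightarrow> real \<Rightarrow> real" where
  "q2 c1 c2 t0 t = - ln (c1 - c2) + c2 * (t - t0) + ln (c1 * exp ((c1 - c2) * (t - t0)) - c2)"

definition u :: "real \<Rightarrow> real \<Rightarrow> real \<Rightarrow> real \<Rightarrow> real \<Rightarrow> real" where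
  "u c1 c2 t0 t x = p1 c1 c2 t0 t * exp (- \<bar>x - q1 c1 c2 t0 t\<bar>)
                  + p2 c1 c2 t0 t * exp (- \<bar>x - q2 c1 c2 t0 t\<bar>)"

definition Cf :: "real \<Rightarrow> real \<Rightarrow> real \<Rightarrow> real \<Rightarrow> real" where
  "Cf c1 c2 t0 \<xi> = c2 - c1 * exp (- (c1 - c2) * t0) + (c1 - c2) * exp (\<xi> + c2 * t0)"

definition Df :: "real \<Rightarrow> real \<Rightarrow> real \<Rightarrow> real \<Rightarrow> real" where
  "Df c1 c2 t0 \<xi> = (c1 - c2)^2 * exp (- c1 * t0) - (c1 - c2) * c1 * exp \<xi>
                   + (c1 - c2) * c2 * exp (\<xi> - (c1 - c2) * t0)"

definition Qden :: "real \<Rightarrow> real \<Rightarrow> real \<Rightarrow> real \<Rightarrow> real \<Rightarrow> real" where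
  "Qden c1 c2 t0 t \<xi> = Df c1 c2 t0 \<xi>
     + (c1 * exp (c2 * (t - t0)) - c2 * exp (c1 * (t - t0))) * Cf c1 c2 t0 \<xi>"

definition Qnum :: "real \<Rightarrow> real \<Rightarrow> real \<Rightarrow> real \<Rightarrow> real \<Rightarrow> real" where
  "Qnum c1 c2 t0 t \<xi> = (c1 * exp ((c1 - c2) * (t - t0)) - c2) * Df c1 c2 t0 \<xi>
     + (c1 - c2)^2 * exp (c1 * (t - t0)) * Cf c1 c2 t0 \<xi>"

definition ym :: "real \<Rightarrow> real \<Rightarrow> real \<Rightarrow> real \<Rightarrow> real \<Rightarrow> real" where
  "ym c1 c2 t0 t \<xi> = ln (exp (c2 * (t - t0)) / (c1 - c2)
     * (Qnum c1 c2 t0 t \<xi> / Qden c1 c2 t0 t \<xi>))"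

end

theory Submission
  imports Defs
begin

lemma CD_signs:
  fixes c1 c2 t0 \<xi> :: real
  assumes c1: "c1 > 0" and c2: "c2 < 0" and t0: "t0 > 0"
    and xi: "\<xi> \<in> {q1 c1 c2 t0 0 .. q2 c1 c2 t0 0}"
  shows "Cf c1 c2 t0 \<xi> \<le> 0 \<and> Df c1 c2 t0 \<xi> \<le> 0 \<and> (Cf c1 c2 t0 \<xi> < 0 \<or> Df c1 c2 t0 \<xi> < 0)"
proof -
  define L where "L = c1 - c2"
  define X where "X = exp \<xi>"
  define a0 where "a0 = exp (- c1 * t0)"
  define g where "g = exp (c2 * t0)"
  have L: "L > 0" using c1 c2 L_def by simp
  have X: "X > 0" "a0 > 0" "g > 0" using X_def a0_def g_def by auto
  have E0: "a0 * g < 1"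
  proof -
    have "a0 * g = exp (- (L * t0))" unfolding a0_def g_def L_def by (simp add: exp_add[symmetric] algebra_simps)
    also have "\<dots> < 1" using L t0 by simp
    finally show ?thesis .
  qed
  have eL: "exp ((c1 - c2) * (0 - t0)) = a0 * g"
    unfolding a0_def g_def by (simp add: exp_add[symmetric] algebra_simps)
  have "c2 * (a0 * g) < 0" "c1 * (a0 * g) > 0" using c1 c2 X by (simp_all add: mult_neg_pos)
  hence w1: "c1 - c2 * (a0 * g) > 0" and w2: "c1 * (a0 * g) - c2 > 0" using c1 c2 by linarith+
  have "exp (q1 c1 c2 t0 0) \<le> X" using xi X_def by simp
  also have "exp (q1 c1 c2 t0 0) = L * a0 / (c1 - c2 * (a0 * g))"
    unfolding q1_def eL using L w1 by (simp add: exp_add exp_diff exp_minus a0_def L_def field_simps)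
  finally have lo: "L * a0 \<le> X * (c1 - c2 * (a0 * g))" using w1 by (simp add: divide_simps)
  have "X \<le> exp (q2 c1 c2 t0 0)" using xi X_def by simp
  also have "exp (q2 c1 c2 t0 0) = (c1 * (a0 * g) - c2) / (L * g)"
    unfolding q2_def eL using L w2 X by (simp add: exp_add exp_diff exp_minus g_def L_def field_simps)
  finally have hi: "X * (L * g) \<le> c1 * (a0 * g) - c2" using L X by (simp add: divide_simps)
  have C: "Cf c1 c2 t0 \<xi> = c2 - c1 * (a0 * g) + L * (X * g)"
    unfolding Cf_def L_def X_def a0_def g_def by (simp add: exp_add[symmetric] algebra_simps)
  have D: "Df c1 c2 t0 \<xi> = L^2 * a0 - L * c1 * X + L * c2 * (X * a0 * g)"
    unfolding Df_def L_def X_def a0_def g_def by (simp add: exp_add[symmetric] exp_diff algebra_simps)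
  have Cle: "Cf c1 c2 t0 \<xi> \<le> 0" using C hi by (simp add: algebra_simps)
  have Dle: "Df c1 c2 t0 \<xi> \<le> 0"
  proof -
    have "L * (L * a0) \<le> L * (X * (c1 - c2 * (a0 * g)))" using lo L by simp
    thus ?thesis using D by (simp add: algebra_simps power2_eq_square)
  qed
  have gap: "L * a0 * (L * g) < (c1 - c2 * (a0 * g)) * (c1 * (a0 * g) - c2)"
  proof -
    have "(c1 - c2 * (a0 * g)) * (c1 * (a0 * g) - c2) - L * a0 * (L * g) = - c1 * c2 * (1 - a0*g)^2"
      unfolding L_def by (simp add: algebra_simps power2_eq_square)
    moreover have "- c1 * c2 * (1 - a0*g)^2 > 0"
    proof -
      have "(1 - a0*g)^2 > 0" using E0 by simp
      moreover have "- c1 * c2 > 0" using c1 c2 by (simp add: mult_pos_neg)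
      ultimately show ?thesis by (metis mult_pos_pos mult_minus_left)
    qed
    ultimately show ?thesis by linarith
  qed
  have "Cf c1 c2 t0 \<xi> < 0 \<or> Df c1 c2 t0 \<xi> < 0"
  proof (rule ccontr)
    assume "\<not> ?thesis"
    hence "Cf c1 c2 t0 \<xi> = 0" "Df c1 c2 t0 \<xi> = 0" using Cle Dle by auto
    hence e1: "X * (L * g) = c1 * (a0 * g) - c2" and e2: "L * a0 = X * (c1 - c2 * (a0 * g))"
    proof -
      show "X * (L * g) = c1 * (a0 * g) - c2" using C \<open>Cf c1 c2 t0 \<xi> = 0\<close> by (auto simp: algebra_simps)
      have "L * (L * a0 - X * (c1 - c2 * (a0 * g))) = 0" using D \<open>Df c1 c2 t0 \<xi> = 0\<close> by (simp add: algebra_simps power2_eq_square)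
      thus "L * a0 = X * (c1 - c2 * (a0 * g))" using L by simp
    qed
    have "L * a0 * (L * g) = (X * (c1 - c2 * (a0 * g))) * (L * g)" by (simp only: e2)
    also have "\<dots> = (c1 - c2 * (a0 * g)) * (X * (L * g))" by (simp only: mult_ac)
    also have "\<dots> = (c1 - c2 * (a0 * g)) * (c1 * (a0 * g) - c2)" by (simp only: e1)
    finally show False using gap by simp
  qed
  thus ?thesis using Cle Dle by simp
qed

lemma key_poly:
  fixes a b c1 c2 C D :: real
  assumes b: "b \<noteq> 0"
  defines "L \<equiv> c1 - c2"
  defines "N \<equiv> (c1 * (a/b) - c2) * D + L^2 * a * C"
  defines "Dn \<equiv> D + (c1 * b - c2 * a) * C"
  defines "N' \<equiv> c1 * L * (a/b) * D + L^2 * c1 * a * C"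
  defines "Dn' \<equiv> (c1 * c2 * b - c2 * c1 * a) * C"
  shows "(b - a) * (c2 * N * Dn + N' * Dn - Dn' * N) = a * L^2 * Dn^2 - b * N^2"
  using b unfolding N_def Dn_def N'_def Dn'_def L_def
  by (simp add: field_simps power2_eq_square)

lemma ode_gen:
  fixes a b c1 c2 L N Dn N' Dn' :: real
  assumes a: "a > 0" and b: "b > 0" and ab: "a \<noteq> b" and L: "L \<noteq> 0"
    and w1: "c1 - c2*(a/b) \<noteq> 0" and w2: "c1*(a/b) - c2 \<noteq> 0" and N: "N \<noteq> 0" and Dn: "Dn \<noteq> 0"
    and key: "(b - a) * (c2 * N * Dn + N' * Dn - Dn' * N) = a * L^2 * Dn^2 - b * N^2"
  shows "c2 + N'/N - Dn'/Dn = (c1 - c2*(a/b))/(1 - a/b) * (L*a/(c1 - c2*(a/b))) / (b/L*(N/Dn))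
     + (c2 - c1*(a/b))/(1 - a/b) * (b/L*(N/Dn)) / (b*(c1*(a/b)-c2)/L)"
proof -
  have e: "1 - a/b = (b - a)/b" using b by (simp add: field_simps)
  have ba: "b - a \<noteq> 0" using ab by simp
  have r1: "(c1 - c2*(a/b))/(1 - a/b) * (L*a/(c1 - c2*(a/b))) / (b/L*(N/Dn)) = L^2*a*Dn/((b-a)*N)"
  proof -
    have "(c1 - c2*(a/b))/(1 - a/b) * (L*a/(c1 - c2*(a/b))) = L*a/(1 - a/b)"
    proof -
      have g: "\<And>w r z :: real. w \<noteq> 0 \<Longrightarrow> w/r*(z/w) = z/r" by (simp add: field_simps)
      show ?thesis using g[OF w1] .
    qed
    also have "\<dots> = L*a*b/(b-a)" unfolding e using b ba by (simp add: field_simps)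
    finally have "(c1 - c2*(a/b))/(1 - a/b) * (L*a/(c1 - c2*(a/b))) / (b/L*(N/Dn)) = L*a*b/(b-a) / (b/L*(N/Dn))"
      by simp
    also have "\<dots> = L^2*a*Dn/((b-a)*N)" using b ba L N Dn by (simp add: field_simps power2_eq_square)
    finally show ?thesis .
  qed
  have r2: "(c2 - c1*(a/b))/(1 - a/b) * (b/L*(N/Dn)) / (b*(c1*(a/b)-c2)/L) = - (b*N/((b-a)*Dn))"
  proof -
    have g: "\<And>w r z :: real. w \<noteq> 0 \<Longrightarrow> (-w)/r*z/(b*w/L) = - (z*L/(r*b))" using b by (simp add: field_simps)
    have eq: "c2 - c1*(a/b) = - (c1*(a/b) - c2)" by simp
    have "(c2 - c1*(a/b))/(1 - a/b) * (b/L*(N/Dn)) / (b*(c1*(a/b)-c2)/L) = - ((b/L*(N/Dn))*L/((1 - a/b)*b))"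
      unfolding eq by (rule g[OF w2])
    also have "(b/L*(N/Dn))*L/((1 - a/b)*b) = b*N/((b-a)*Dn)" unfolding e using b ba L N Dn by (simp add: field_simps)
    finally show ?thesis .
  qed
  have "c2 + N'/N - Dn'/Dn = (c2 * N * Dn + N' * Dn - Dn' * N) / (N * Dn)"
    using N Dn by (simp add: field_simps)
  also have "\<dots> = ((b - a) * (c2 * N * Dn + N' * Dn - Dn' * N)) / ((b - a) * (N * Dn))"
    using ba by simp
  also have "\<dots> = (a * L^2 * Dn^2 - b * N^2) / ((b - a) * (N * Dn))"
    by (simp only: key)
  also have "\<dots> = L^2*a*Dn/((b-a)*N) - (b*N/((b-a)*Dn))"
  proof -
    have g: "\<And>d. d \<noteq> 0 \<Longrightarrow> (a * L^2 * Dn^2 - b * N^2) / (d * (N * Dn)) = L^2*a*Dn/(d*N) - (b*N/(d*Dn))"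
      using N Dn by (simp add: field_simps power2_eq_square)
    show ?thesis by (rule g[OF ba])
  qed
  finally show ?thesis using r1 r2 by simp
qed

lemma sgn_alg:
  fixes a b c1 c2 C D :: real
  assumes c1: "c1 > 0" and c2: "c2 < 0" and a: "a > 0" and b: "b > 0"
    and C: "C \<le> 0" and D: "D \<le> 0" and CD: "C < 0 \<or> D < 0"
  shows "D + (c1*b - c2*a)*C < 0 \<and> (c1*(a/b) - c2)*D + (c1-c2)^2*a*C < 0"
proof -
  have k1: "c1*b - c2*a > 0" proof -
    have "c1*b > 0" "c2*a < 0" using c1 c2 a b by (simp_all add: mult_neg_pos divide_neg_pos)
    thus ?thesis by linarith
  qed
  have k2: "c1*(a/b) - c2 > 0" proof -
    have "c1*(a/b) > 0" "c2*(a/b) < 0" using c1 c2 a b by (simp_all add: mult_neg_pos divide_neg_pos)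
    thus ?thesis using c1 c2 by linarith
  qed
  have k3: "(c1-c2)^2*a > 0" using c1 c2 a by simp
  show ?thesis
  proof (cases "C < 0")
    case True
    have "(c1*b - c2*a)*C < 0" "(c1-c2)^2*a*C < 0" "(c1*(a/b) - c2)*D \<le> 0"
      using True k1 k3 k2 D by (simp_all add: mult_pos_neg mult_nonneg_nonpos)
    thus ?thesis using D by linarith
  next
    case False
    hence "C = 0" "D < 0" using C CD by auto
    thus ?thesis using k2 by (simp add: mult_pos_neg)
  qed
qed

lemma bnd_alg:
  fixes a b c1 c2 C D :: real
  assumes c1: "c1 > 0" and c2: "c2 < 0" and a: "a > 0" and b: "b > 0"
    and C: "C \<le> 0" and D: "D \<le> 0"
    and Dn: "D + (c1*b - c2*a)*C < 0"
  shows "(c1-c2)*a/(c1 - c2*(a/b)) \<le> b/(c1-c2)*(((c1*(a/b) - c2)*D + (c1-c2)^2*a*C)/(D + (c1*b - c2*a)*C))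
   \<and> b/(c1-c2)*(((c1*(a/b) - c2)*D + (c1-c2)^2*a*C)/(D + (c1*b - c2*a)*C)) \<le> b*(c1*(a/b) - c2)/(c1-c2)"
proof -
  define L where "L = c1 - c2"
  define N where "N = (c1*(a/b) - c2)*D + (c1-c2)^2*a*C"
  define Dv where "Dv = D + (c1*b - c2*a)*C"
  define w where "w = c1 - c2*(a/b)"
  define v where "v = c1*(a/b) - c2"
  define k where "k = c1*b - c2*a"
  have L: "L > 0" using c1 c2 L_def by simp
  have w: "w > 0" proof -
    have "c1*(a/b) > 0" "c2*(a/b) < 0" using c1 c2 a b by (simp_all add: mult_neg_pos divide_neg_pos)
    thus ?thesis using c1 c2 w_def by linarith
  qed
  have v: "v > 0" proof -
    have "c1*(a/b) > 0" "c2*(a/b) < 0" using c1 c2 a b by (simp_all add: mult_neg_pos divide_neg_pos)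
    thus ?thesis using c1 c2 v_def by linarith
  qed
  have Dv: "Dv < 0" using Dn Dv_def by simp
  have cc: "c1 * c2 < 0" using c1 c2 by (simp add: mult_pos_neg)
  have sq: "(b-a)^2/b \<ge> 0" using b by simp
  have bw: "b * w = k" unfolding w_def k_def using b by (simp add: field_simps)
  have id1: "L^2 * a * Dv - k * N = (D*(c1*c2)) * ((b-a)^2/b)"
    unfolding L_def Dv_def k_def N_def using b by (simp add: field_simps power2_eq_square)
  have id2: "N - v * Dv = (C*(c1*c2)) * ((b-a)^2/b)"
    unfolding v_def Dv_def N_def using b by (simp add: field_simps power2_eq_square)
  have "D*(c1*c2) \<ge> 0" using D cc by (simp add: mult_nonpos_nonpos)
  hence i1: "k * N \<le> L^2 * a * Dv" using id1 mult_nonneg_nonneg[OF _ sq] by fastforce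
  have "C*(c1*c2) \<ge> 0" using C cc by (simp add: mult_nonpos_nonpos)
  hence i2: "v * Dv \<le> N" using id2 mult_nonneg_nonneg[OF _ sq] by fastforce
  have Y1: "b/L*(N/Dv) * w = k*N/(L*Dv)"
  proof -
    have "b/L*(N/Dv) * w = (b*w)*N/(L*Dv)" by simp
    thus ?thesis unfolding bw .
  qed
  have "L*a \<le> k*N/(L*Dv)"
  proof -
    have LD: "L*Dv < 0" using L Dv by (simp add: mult_pos_neg)
    have "k*N \<le> (L*a)*(L*Dv)" using i1 by (simp add: power2_eq_square algebra_simps)
    thus ?thesis using LD by (simp add: le_divide_eq)
  qed
  hence "L*a \<le> b/L*(N/Dv) * w" unfolding Y1 .
  hence r1: "L*a/w \<le> b/L*(N/Dv)" using w by (simp add: pos_divide_le_eq)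
  have "N/Dv \<le> v" using Dv i2 by (simp add: divide_le_eq)
  moreover have "b/L \<ge> 0" using b L by simp
  ultimately have "b/L*(N/Dv) \<le> b/L*v" by (rule mult_left_mono)
  hence r2: "b/L*(N/Dv) \<le> b*v/L" by simp
  show ?thesis using r1 r2 unfolding L_def N_def Dv_def w_def v_def by blast
qed

lemma eE: "exp ((c1 - c2) * (t - t0)) = exp (c1 * (t - t0)) / exp (c2 * (t - t0::real))"
proof -
  have "(c1 - c2) * (t - t0) = c1 * (t - t0) - c2 * (t - t0)" by (simp add: algebra_simps)
  thus ?thesis using exp_diff[of "c1 * (t - t0)" "c2 * (t - t0)"] by simp
qed

lemma Qnum_eq: "Qnum c1 c2 t0 t \<xi> = (c1 * (exp (c1 * (t - t0)) / exp (c2 * (t - t0))) - c2) * Df c1 c2 t0 \<xi>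
     + (c1 - c2)^2 * exp (c1 * (t - t0)) * Cf c1 c2 t0 \<xi>"
  unfolding Qnum_def eE ..

lemma init_alg:
  fixes a0 b c1 c2 L X :: real
  assumes b: "b > 0" and L: "L \<noteq> 0" and Dn: "D + (c1*b - c2*a0)*C \<noteq> 0" and g: "g = 1/b"
    and C: "C = c2 - c1 * (a0 * g) + L * (X * g)"
    and D: "D = L^2 * a0 - L * c1 * X + L * c2 * (X * a0 * g)"
    and Ld: "L = c1 - c2"
  shows "b/L * (((c1*(a0/b) - c2)*D + L^2*a0*C)/(D + (c1*b - c2*a0)*C)) = X"
proof -
  have "b * ((c1*(a0/b) - c2)*D + L^2*a0*C) = X * L * (D + (c1*b - c2*a0)*C)"
    unfolding C D g Ld using b by (simp add: field_simps power2_eq_square)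
  moreover have g2: "\<And>N Dn. b*N = X*L*Dn \<Longrightarrow> Dn \<noteq> 0 \<Longrightarrow> b/L*(N/Dn) = X"
    using L b by (simp add: field_simps)
  ultimately show ?thesis using Dn by blast
qed

lemma pt:
  fixes c1 c2 t0 \<xi> t :: real
  assumes c1: "c1 > 0" and c2: "c2 < 0"
    and CD: "Cf c1 c2 t0 \<xi> \<le> 0" "Df c1 c2 t0 \<xi> \<le> 0" "Cf c1 c2 t0 \<xi> < 0 \<or> Df c1 c2 t0 \<xi> < 0"
  defines "a \<equiv> exp (c1 * (t - t0))" and "b \<equiv> exp (c2 * (t - t0))"
    and "C \<equiv> Cf c1 c2 t0 \<xi>" and "D \<equiv> Df c1 c2 t0 \<xi>"
  shows "Qden c1 c2 t0 t \<xi> = D + (c1*b - c2*a)*C"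
    and "Qnum c1 c2 t0 t \<xi> = (c1*(a/b) - c2)*D + (c1-c2)^2*a*C"
    and "Qden c1 c2 t0 t \<xi> < 0" and "Qnum c1 c2 t0 t \<xi> < 0"
    and "exp (ym c1 c2 t0 t \<xi>) = b/(c1-c2) * (Qnum c1 c2 t0 t \<xi> / Qden c1 c2 t0 t \<xi>)"
    and "exp (q1 c1 c2 t0 t) = (c1-c2)*a/(c1 - c2*(a/b))"
    and "exp (q2 c1 c2 t0 t) = b*(c1*(a/b) - c2)/(c1-c2)"
    and "q1 c1 c2 t0 t \<le> ym c1 c2 t0 t \<xi>" and "ym c1 c2 t0 t \<xi> \<le> q2 c1 c2 t0 t"
proof -
  have a: "a > 0" and b: "b > 0" unfolding a_def b_def by auto
  have L: "c1 - c2 > 0" using c1 c2 by simp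
  show QdE: "Qden c1 c2 t0 t \<xi> = D + (c1*b - c2*a)*C" unfolding Qden_def a_def b_def C_def D_def ..
  show QnE: "Qnum c1 c2 t0 t \<xi> = (c1*(a/b) - c2)*D + (c1-c2)^2*a*C" unfolding Qnum_eq a_def b_def C_def D_def ..
  have sg: "D + (c1*b - c2*a)*C < 0 \<and> (c1*(a/b) - c2)*D + (c1-c2)^2*a*C < 0"
    using sgn_alg[OF c1 c2 a b CD[folded C_def D_def]] .
  show Qd: "Qden c1 c2 t0 t \<xi> < 0" and Qn: "Qnum c1 c2 t0 t \<xi> < 0" using sg QdE QnE by auto
  have Ypos: "b/(c1-c2) * (Qnum c1 c2 t0 t \<xi> / Qden c1 c2 t0 t \<xi>) > 0"
  proof -
    have "Qnum c1 c2 t0 t \<xi> / Qden c1 c2 t0 t \<xi> > 0" using Qd Qn by (simp add: divide_neg_neg)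
    moreover have "b/(c1-c2) > 0" using b L by simp
    ultimately show ?thesis by (rule mult_pos_pos[rotated])
  qed
  show eY: "exp (ym c1 c2 t0 t \<xi>) = b/(c1-c2) * (Qnum c1 c2 t0 t \<xi> / Qden c1 c2 t0 t \<xi>)"
    unfolding ym_def b_def[symmetric] using Ypos by simp
  have w: "c1 - c2*(a/b) > 0" and v: "c1*(a/b) - c2 > 0"
  proof -
    have "c1*(a/b) > 0" "c2*(a/b) < 0" using c1 c2 a b by (simp_all add: mult_neg_pos divide_neg_pos)
    thus "c1 - c2*(a/b) > 0" "c1*(a/b) - c2 > 0" using c1 c2 by linarith+
  qed
  have eE': "exp ((c1 - c2) * (t - t0)) = a/b" unfolding a_def b_def by (rule eE)
  show e1: "exp (q1 c1 c2 t0 t) = (c1-c2)*a/(c1 - c2*(a/b))"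
    unfolding q1_def eE' using L w by (simp add: exp_diff exp_add a_def)
  show e2: "exp (q2 c1 c2 t0 t) = b*(c1*(a/b) - c2)/(c1-c2)"
    unfolding q2_def eE' using L v by (simp add: exp_diff exp_add exp_minus b_def field_simps)
  have bd: "(c1-c2)*a/(c1 - c2*(a/b)) \<le> b/(c1-c2)*(((c1*(a/b) - c2)*D + (c1-c2)^2*a*C)/(D + (c1*b - c2*a)*C))
   \<and> b/(c1-c2)*(((c1*(a/b) - c2)*D + (c1-c2)^2*a*C)/(D + (c1*b - c2*a)*C)) \<le> b*(c1*(a/b) - c2)/(c1-c2)"
    using bnd_alg[OF c1 c2 a b CD(1-2)[folded C_def D_def]] sg by blast
  have "exp (q1 c1 c2 t0 t) \<le> exp (ym c1 c2 t0 t \<xi>)"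
    unfolding e1 eY QdE QnE using bd by blast
  thus "q1 c1 c2 t0 t \<le> ym c1 c2 t0 t \<xi>" by simp
  have "exp (ym c1 c2 t0 t \<xi>) \<le> exp (q2 c1 c2 t0 t)"
    unfolding e2 eY QdE QnE using bd by blast
  thus "ym c1 c2 t0 t \<xi> \<le> q2 c1 c2 t0 t" by simp
qed

lemma logder_alg:
  fixes b L N Dn N' Dn' c2 :: real
  assumes "b \<noteq> 0" "L \<noteq> 0" "N \<noteq> 0" "Dn \<noteq> 0"
  shows "1 / (b/L*(N/Dn)) * (c2*b/L * (N/Dn) + (N'*Dn - N*Dn')/(Dn*Dn) * (b/L)) = c2 + N'/N - Dn'/Dn"
  using assms by (simp add: field_simps)

lemma dpt:
  fixes c1 c2 t0 \<xi> t :: real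
  assumes c1: "c1 > 0" and c2: "c2 < 0" and tt: "t < t0"
    and CD: "Cf c1 c2 t0 \<xi> \<le> 0" "Df c1 c2 t0 \<xi> \<le> 0" "Cf c1 c2 t0 \<xi> < 0 \<or> Df c1 c2 t0 \<xi> < 0"
  shows "((\<lambda>s. ym c1 c2 t0 s \<xi>) has_real_derivative u c1 c2 t0 t (ym c1 c2 t0 t \<xi>)) (at t)"
proof -
  define a where "a = exp (c1 * (t - t0))"
  define b where "b = exp (c2 * (t - t0))"
  define C where "C = Cf c1 c2 t0 \<xi>"
  define D where "D = Df c1 c2 t0 \<xi>"
  define L where "L = c1 - c2"
  define N where "N = Qnum c1 c2 t0 t \<xi>"
  define Dn where "Dn = Qden c1 c2 t0 t \<xi>"
  define N' where "N' = c1 * L * (a/b) * D + L^2 * c1 * a * C"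
  define Dn' where "Dn' = (c1 * c2 * b - c2 * c1 * a) * C"
  note P = pt[OF c1 c2 CD, of t, folded a_def b_def C_def D_def N_def Dn_def]
  have a: "a > 0" and b: "b > 0" unfolding a_def b_def by auto
  have L: "L > 0" using c1 c2 L_def by simp
  have ab: "a < b"
  proof -
    have "c1 * (t - t0) < c2 * (t - t0)" using c1 c2 tt by (simp add: mult_strict_right_mono_neg)
    thus ?thesis unfolding a_def b_def by simp
  qed
  have fN: "(\<lambda>s. Qnum c1 c2 t0 s \<xi>) = (\<lambda>s. (c1 * (exp (c1 * (s - t0)) / exp (c2 * (s - t0))) - c2) * D + (c1 - c2)^2 * exp (c1 * (s - t0)) * C)"
    by (rule ext) (simp only: Qnum_eq C_def D_def)
  have dN: "((\<lambda>s. Qnum c1 c2 t0 s \<xi>) has_real_derivative N') (at t)"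
    unfolding fN N'_def
    by (auto intro!: derivative_eq_intros simp: a_def b_def L_def field_simps power2_eq_square)
  have fD: "(\<lambda>s. Qden c1 c2 t0 s \<xi>) = (\<lambda>s. D + (c1 * exp (c2 * (s - t0)) - c2 * exp (c1 * (s - t0))) * C)"
    by (rule ext) (simp only: Qden_def C_def D_def)
  have dD: "((\<lambda>s. Qden c1 c2 t0 s \<xi>) has_real_derivative Dn') (at t)"
    unfolding fD Dn'_def
    by (auto intro!: derivative_eq_intros simp: a_def b_def field_simps)
  have dE: "((\<lambda>s. exp (c2 * (s - t0)) / (c1 - c2)) has_real_derivative c2*b/L) (at t)"
  proof -
    have "((\<lambda>s. exp (c2 * (s - t0))) has_real_derivative c2*b) (at t)"
      by (auto intro!: derivative_eq_intros simp: b_def)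
    from DERIV_cdivide[OF this, of "c1 - c2"] show ?thesis unfolding L_def by simp
  qed
  have Dn0: "Dn \<noteq> 0" "N \<noteq> 0" using P(3,4) by auto
  have dY: "((\<lambda>s. exp (c2 * (s - t0)) / (c1 - c2) * (Qnum c1 c2 t0 s \<xi> / Qden c1 c2 t0 s \<xi>)) has_real_derivative
      (c2*b/L * (N/Dn) + (N'*Dn - N*Dn')/(Dn*Dn) * (b/L))) (at t)"
    using DERIV_mult[OF dE DERIV_divide[OF dN dD]] Dn0 unfolding N_def Dn_def b_def L_def by simp
  have Ypos: "b/L * (N/Dn) > 0" using P(5) unfolding L_def by (metis exp_gt_zero)
  have dl: "((\<lambda>s. ym c1 c2 t0 s \<xi>) has_real_derivative 1 / (b/L*(N/Dn)) * (c2*b/L * (N/Dn) + (N'*Dn - N*Dn')/(Dn*Dn) * (b/L))) (at t)"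
  proof -
    have Ypos': "exp (c2*(t-t0))/(c1-c2) * (Qnum c1 c2 t0 t \<xi>/Qden c1 c2 t0 t \<xi>) > 0"
      using Ypos unfolding b_def L_def N_def Dn_def .
    show ?thesis using DERIV_chain2[OF DERIV_ln_divide[OF Ypos'] dY] unfolding ym_def
      by (simp only: b_def L_def N_def Dn_def)
  qed
  have v1: "1 / (b/L*(N/Dn)) * (c2*b/L * (N/Dn) + (N'*Dn - N*Dn')/(Dn*Dn) * (b/L)) = c2 + N'/N - Dn'/Dn"
    by (rule logder_alg) (use b L Dn0 in auto)
  have key: "(b - a) * (c2 * N * Dn + N' * Dn - Dn' * N) = a * L^2 * Dn^2 - b * N^2"
    unfolding P(1,2) N'_def Dn'_def L_def using key_poly[of b a c2 c1 D C] b by simp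
  have w1: "c1 - c2*(a/b) \<noteq> 0" and w2: "c1*(a/b) - c2 \<noteq> 0"
  proof -
    have "c1*(a/b) > 0" "c2*(a/b) < 0" using c1 c2 a b by (simp_all add: mult_neg_pos divide_neg_pos)
    thus "c1 - c2*(a/b) \<noteq> 0" "c1*(a/b) - c2 \<noteq> 0" using c1 c2 by linarith+
  qed
  have ode: "c2 + N'/N - Dn'/Dn = (c1 - c2*(a/b))/(1 - a/b) * (L*a/(c1 - c2*(a/b))) / (b/L*(N/Dn))
     + (c2 - c1*(a/b))/(1 - a/b) * (b/L*(N/Dn)) / (b*(c1*(a/b)-c2)/L)"
    by (rule ode_gen[OF a b _ _ w1 w2 Dn0(2) Dn0(1) key]) (use ab L in auto)
  define y where "y = ym c1 c2 t0 t \<xi>"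
  have eE': "exp ((c1 - c2) * (t - t0)) = a/b" unfolding a_def b_def by (rule eE)
  have u1: "exp (- \<bar>y - q1 c1 c2 t0 t\<bar>) = exp (q1 c1 c2 t0 t) / exp y"
  proof -
    have "\<bar>y - q1 c1 c2 t0 t\<bar> = y - q1 c1 c2 t0 t" using P(8) y_def by simp
    thus ?thesis by (simp add: exp_diff)
  qed
  have u2: "exp (- \<bar>y - q2 c1 c2 t0 t\<bar>) = exp y / exp (q2 c1 c2 t0 t)"
  proof -
    have "\<bar>y - q2 c1 c2 t0 t\<bar> = q2 c1 c2 t0 t - y" using P(9) y_def by simp
    thus ?thesis by (simp add: exp_diff)
  qed
  have uu: "u c1 c2 t0 t y = (c1 - c2*(a/b))/(1 - a/b) * (L*a/(c1 - c2*(a/b))) / (b/L*(N/Dn))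
     + (c2 - c1*(a/b))/(1 - a/b) * (b/L*(N/Dn)) / (b*(c1*(a/b)-c2)/L)"
  proof -
    have ey: "exp y = b/L*(N/Dn)" using P(5) y_def L_def by simp
    show ?thesis unfolding u_def u1 u2 ey P(6) P(7) p1_def p2_def eE' L_def by (simp add: mult_ac)
  qed
  show ?thesis using dl unfolding v1 ode uu[symmetric] y_def .
qed

theorem mainTheorem4:
  fixes c1 c2 t0 \<xi> :: real
  assumes "c1 > 0" and "c2 < 0" and "t0 > 0"
    and "\<xi> \<in> {q1 c1 c2 t0 0 .. q2 c1 c2 t0 0}"
  shows "(\<forall>t\<in>{0..<t0}. Qden c1 c2 t0 t \<xi> < 0 \<and> Qnum c1 c2 t0 t \<xi> < 0)
    \<and> ym c1 c2 t0 0 \<xi> = \<xi>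
    \<and> (\<forall>t\<in>{0..<t0}. q1 c1 c2 t0 t \<le> ym c1 c2 t0 t \<xi> \<and> ym c1 c2 t0 t \<xi> \<le> q2 c1 c2 t0 t)
    \<and> (\<forall>t\<in>{0..<t0}. ((\<lambda>s. ym c1 c2 t0 s \<xi>) has_real_derivative
                          u c1 c2 t0 t (ym c1 c2 t0 t \<xi>)) (at t within {0..<t0}))
    \<and> ((\<lambda>t. ym c1 c2 t0 t \<xi>) \<longlongrightarrow> 0) (at_left t0)"
proof -
  note c1 = assms(1) and c2 = assms(2)
  have CD: "Cf c1 c2 t0 \<xi> \<le> 0" "Df c1 c2 t0 \<xi> \<le> 0" "Cf c1 c2 t0 \<xi> < 0 \<or> Df c1 c2 t0 \<xi> < 0"
    using CD_signs[OF assms] by auto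
  note P = pt[OF c1 c2 CD]
  have S1: "\<forall>t\<in>{0..<t0}. Qden c1 c2 t0 t \<xi> < 0 \<and> Qnum c1 c2 t0 t \<xi> < 0" using P(3,4) by blast
  have S3: "\<forall>t\<in>{0..<t0}. q1 c1 c2 t0 t \<le> ym c1 c2 t0 t \<xi> \<and> ym c1 c2 t0 t \<xi> \<le> q2 c1 c2 t0 t"
    using P(8,9) by blast
  have S4: "\<forall>t\<in>{0..<t0}. ((\<lambda>s. ym c1 c2 t0 s \<xi>) has_real_derivative
                          u c1 c2 t0 t (ym c1 c2 t0 t \<xi>)) (at t within {0..<t0})"
  proof
    fix t assume "t \<in> {0..<t0}"
    hence "t < t0" by simp
    from dpt[OF c1 c2 this CD] show "((\<lambda>s. ym c1 c2 t0 s \<xi>) has_real_derivative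
                          u c1 c2 t0 t (ym c1 c2 t0 t \<xi>)) (at t within {0..<t0})"
      by (rule has_field_derivative_at_within)
  qed
  have S2: "ym c1 c2 t0 0 \<xi> = \<xi>"
  proof -
    define a where "a = exp (c1 * (0 - t0))"
    define b where "b = exp (c2 * (0 - t0))"
    define g where "g = 1 / b"
    define X where "X = exp \<xi>"
    define L where "L = c1 - c2"
    have b: "b > 0" unfolding b_def by simp
    have L: "L \<noteq> 0" using c1 c2 L_def by simp
    have g: "g = exp (c2 * t0)" unfolding g_def b_def by (simp add: exp_minus field_simps)
    have ag: "a * g = exp (- (c1 - c2) * t0)"
      unfolding a_def g exp_add[symmetric] by (simp add: algebra_simps)
    have Ce: "Cf c1 c2 t0 \<xi> = c2 - c1 * (a * g) + L * (X * g)"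
    proof -
      have Xg: "X * g = exp (\<xi> + c2 * t0)" unfolding X_def g exp_add[symmetric] ..
      show ?thesis unfolding Cf_def ag[symmetric] Xg[symmetric] L_def ..
    qed
    have Xag: "X * a * g = exp (\<xi> - (c1 - c2) * t0)"
      unfolding X_def a_def g exp_add[symmetric] by (simp add: algebra_simps)
    have De: "Df c1 c2 t0 \<xi> = L^2 * a - L * c1 * X + L * c2 * (X * a * g)"
      unfolding Df_def Xag[symmetric] L_def X_def a_def by simp
    have Dn: "Df c1 c2 t0 \<xi> + (c1*b - c2*a)*Cf c1 c2 t0 \<xi> \<noteq> 0"
      using P(3)[of 0] P(1)[of 0] unfolding a_def b_def by simp
    have "b/L * (((c1*(a/b) - c2)*Df c1 c2 t0 \<xi> + L^2*a*Cf c1 c2 t0 \<xi>)/(Df c1 c2 t0 \<xi> + (c1*b - c2*a)*Cf c1 c2 t0 \<xi>)) = X"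
      by (rule init_alg[OF b L Dn g_def Ce De L_def])
    hence "exp (ym c1 c2 t0 0 \<xi>) = exp \<xi>"
      unfolding P(5)[of 0] P(1)[of 0] P(2)[of 0] a_def[symmetric] b_def[symmetric] L_def[symmetric] X_def .
    thus ?thesis by simp
  qed
  have S5: "((\<lambda>t. ym c1 c2 t0 t \<xi>) \<longlongrightarrow> 0) (at_left t0)"
  proof -
    have L: "c1 - c2 > 0" using c1 c2 by simp
    have Dn: "Qden c1 c2 t0 t0 \<xi> < 0" using P(3) .
    have Dn1: "Qden c1 c2 t0 t0 \<xi> = Df c1 c2 t0 \<xi> + (c1 - c2) * Cf c1 c2 t0 \<xi>"
      using P(1)[of t0] by (simp add: algebra_simps)
    have N1: "Qnum c1 c2 t0 t0 \<xi> = (c1 - c2) * Qden c1 c2 t0 t0 \<xi>"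
      unfolding P(2)[of t0] Dn1 by (simp add: algebra_simps power2_eq_square)
    have "exp (ym c1 c2 t0 t0 \<xi>) = 1"
      using P(5)[of t0] N1 Dn L by simp
    hence y0: "ym c1 c2 t0 t0 \<xi> = 0" by simp
    have pos: "exp (c2 * (t0 - t0)) / (c1 - c2) * (Qnum c1 c2 t0 t0 \<xi> / Qden c1 c2 t0 t0 \<xi>) > 0"
      using P(5)[of t0] by (metis exp_gt_zero)
    have "isCont (\<lambda>s. ym c1 c2 t0 s \<xi>) t0"
      unfolding ym_def using pos Dn
      unfolding Qnum_def Qden_def
      by (intro continuous_intros) auto
    hence "((\<lambda>t. ym c1 c2 t0 t \<xi>) \<longlongrightarrow> 0) (at t0)" using y0 isCont_def by metis
    thus ?thesis by (rule tendsto_mono[OF at_le, rotated]) simp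
  qed
  show ?thesis using S1 S2 S3 S4 S5 by blast
qed

end
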